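(* In the single parameter setting with Greedy, against a perturbed adversary satisfying $(r,\lambda_0)$ diversity, for all $i,t$, \[ \lambda_{\min}\left(\mathbb{E}\left[x_i^t(x_i^t)^\top\,\middle|\,i^t=i,\ \hat c_i^t\text{ is }r\text{-good}\right]\right)\ge\lambda_0, \] where the expectation is over the perturbations of round $t$, with the history, $\hat\beta^t$ and $\mu_1^t,\dots,\mu_k^t$ fixed.
   Context: Single parameter setting: unknown $\beta\in\mathbb{R}^d$; in round $t$ contexts $x_1^t,\dots,x_k^t$ are presented, Greedy computes the least squares estimate $\hat\beta^t$ from previously chosen contexts and rewards and picks $i^t=\arg\max_i\hat\beta^t\cdot x_i^t$. Perturbed adversary: each round, an adaptive adversary (given the history) picks $\mu_1^t,\dots,\mu_k^t$ with $\|\mu_i^t\|\le1$, and $x_i^t=\mu_i^t+e_i^t$ where $e_i^t\sim\mathcal{D}_i^t$ are mean-zero, independent of each other and of the adversary's choices given the history. A distribution $\mathcal{D}$ is $(r,\lambda_0)$-diverse if for all $\hat\beta$, $\|\mu\|\le1$, $\hat b\le r\|\hat\beta\|$, with $e\sim\mathcal{D}$ and $x=\mu+e$: $\lambda_{\min}(\mathbb{E}[xx^\top\mid\hat\beta\cdot e\ge\hat b])\ge\lambda_0$; the adversary satisfies $(r,\lambda_0)$ diversity if every $\mathcal{D}_i^t$ does. Threshold: $\hat c_i^t=\max_{j\neq i}\hat\beta^t\cdot x_j^t$; a realization of $\hat c_i^t$ is $r$-good (for arm $i$) if $\hat c_i^t\le\hat\beta^t\cdot\mu_i^t+r\|\hat\beta^t\|$.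 *)

theory Defs
  imports "HOL-Probability.Probability"
begin

definition outer :: "real^'d \<Rightarrow> real^'d^'d" where
  "outer x = (\<chi> i j. x $ i * x $ j)"

definition lambda_min :: "real^'d^'d \<Rightarrow> real" where
  "lambda_min M = Min {l. \<exists>v. v \<noteq> 0 \<and> M *v v = l *\<^sub>R v}"

definition cond_expect_on :: "'a measure \<Rightarrow> 'a set \<Rightarrow> ('a \<Rightarrow> 'b::{banach,second_countable_topology}) \<Rightarrow> 'b" where
  "cond_expect_on M A f = (1 / measure M A) *\<^sub>R (\<integral>\<omega>. indicator A \<omega> *\<^sub>R f \<omega> \<partial>M)"

definition diverse :: "real \<Rightarrow> real \<Rightarrow> (real^'d) measure \<Rightarrow> bool" where
  "diverse r l0 D \<longleftrightarrow>
     (\<forall>(\<beta>::real^'d) (\<mu>::real^'d) (bh::real).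
        norm \<mu> \<le> 1 \<longrightarrow> bh \<le> r * norm \<beta> \<longrightarrow>
        l0 \<le> lambda_min (cond_expect_on D {e \<in> space D. \<beta> \<bullet> e \<ge> bh} (\<lambda>e. outer (\<mu> + e))))"

text \<open>Realization of c_hat_i = max_{j \<noteq> i} beta.x_j is r-good for arm i
  (written without Max; with no other arm the max is -infinity, always good).\<close>
definition r_good :: "real \<Rightarrow> nat \<Rightarrow> real^'d \<Rightarrow> (nat \<Rightarrow> real^'d) \<Rightarrow> (nat \<Rightarrow> real^'d) \<Rightarrow> nat \<Rightarrow> bool" where
  "r_good r k \<beta> \<mu> x i \<longleftrightarrow>
     (\<forall>j<k. j \<noteq> i \<longrightarrow> \<beta> \<bullet> x j \<le> \<beta> \<bullet> \<mu> i + r * norm \<beta>)"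

definition greedy_picks :: "nat \<Rightarrow> real^'d \<Rightarrow> (nat \<Rightarrow> real^'d) \<Rightarrow> nat \<Rightarrow> bool" where
  "greedy_picks k \<beta> x i \<longleftrightarrow> i < k \<and> (\<forall>j<k. \<beta> \<bullet> x j \<le> \<beta> \<bullet> x i)"

end

theory Submission
  imports Defs
begin


lemma sym_inner:
  fixes M :: "real^'d^'d"
  assumes "transpose M = M"
  shows "v \<bullet> (M *v w) = w \<bullet> (M *v v)"
proof -
  have "v \<bullet> (M *v w) = (v v* M) \<bullet> w" by (simp add: dot_lmul_matrix)
  also have "v v* M = M *v v" using assms by (metis transpose_matrix_vector)
  finally show ?thesis by (simp add: inner_commute)
qed

lemma quad_zero:
  fixes a b :: real
  assumes "\<And>t. 0 \<le> a * t + b * t^2"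
  shows "a = 0"
proof (rule ccontr)
  assume a: "a \<noteq> 0"
  define t where "t = - a / (2 * (abs b + 1))"
  have p: "abs b + 1 > 0" by simp
  have "a * t + b * t^2 \<le> a * t + abs b * t^2"
    by (intro add_left_mono mult_right_mono) auto
  also have "\<dots> = -(a^2) / (2 * (abs b + 1)) + abs b * a^2 / (4 * (abs b + 1)^2)"
    unfolding t_def using p by (simp add: field_simps power2_eq_square)
  also have "abs b * a^2 / (4 * (abs b + 1)^2) \<le> a^2 / (4 * (abs b + 1))"
  proof -
    have e: "abs b * a^2 / (4 * (abs b + 1)^2) = (a^2/(4*(abs b+1))) * (abs b/(abs b+1))"
      using p by (simp add: power2_eq_square algebra_simps)
    have "abs b/(abs b+1) \<le> 1" using p by simp
    then have "(a^2/(4*(abs b+1))) * (abs b/(abs b+1)) \<le> (a^2/(4*(abs b+1))) * 1"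
      by (intro mult_left_mono) auto
    then show ?thesis using e by simp
  qed
  finally have "a * t + b * t^2 \<le> -(a^2) / (2 * (abs b + 1)) + a^2 / (4 * (abs b + 1))" by simp
  also have "\<dots> = -(a^2) / (4 * (abs b + 1))"
  proof -
    have g: "-x/(2*c) + x/(4*c) = -x/(4*c)" if "c > 0" for x c :: real using that by (simp add: field_simps)
    show ?thesis using g[OF p] by simp
  qed
  also have "\<dots> < 0" using a p by simp
  finally show False using assms[of t] by simp
qed

lemma rayleigh_min:
  fixes M :: "real^'d^'d"
  assumes "transpose M = M"
  obtains u where "norm u = 1" "M *v u = (u \<bullet> (M *v u)) *\<^sub>R u"
    "\<And>v. (u \<bullet> (M *v u)) * (v \<bullet> v) \<le> v \<bullet> (M *v v)"
proof -
  have cont: "continuous_on (sphere 0 1) (\<lambda>v::real^'d. v \<bullet> (M *v v))"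
    by (intro continuous_intros bounded_linear.continuous_on[OF matrix_vector_mul_bounded_linear]) 
  obtain u where u: "u \<in> sphere 0 1" and umin: "\<And>v. v \<in> sphere 0 1 \<Longrightarrow> u \<bullet> (M *v u) \<le> v \<bullet> (M *v v)"
    using continuous_attains_inf[OF compact_sphere _ cont] by (auto simp: sphere_eq_empty)
  define m where "m = u \<bullet> (M *v u)"
  have nu: "norm u = 1" using u by simp
  have uu: "u \<bullet> u = 1" using nu by (simp add: norm_eq_1)
  have ray: "m * (v \<bullet> v) \<le> v \<bullet> (M *v v)" for v
  proof (cases "v = 0")
    case True then show ?thesis by simp
  next
    case False
    define w where "w = (1 / norm v) *\<^sub>R v"
    have "w \<in> sphere 0 1" using False by (simp add: w_def)
    then have "m \<le> w \<bullet> (M *v w)" using umin m_def by simp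
    also have "w \<bullet> (M *v w) = (v \<bullet> (M *v v)) / (norm v)^2"
      by (simp add: w_def matrix_vector_mult_scaleR power2_eq_square)
    finally have "m * (norm v)^2 \<le> v \<bullet> (M *v v)" using False by (simp add: field_simps)
    then show ?thesis by (simp add: power2_norm_eq_inner)
  qed
  have "w \<bullet> (M *v u - m *\<^sub>R u) = 0" for w
  proof -
    have "0 \<le> (2 * (w \<bullet> (M *v u) - m * (u \<bullet> w))) * t + (w \<bullet> (M *v w) - m * (w \<bullet> w)) * t^2" for t
    proof -
      have r: "m * ((u + t *\<^sub>R w) \<bullet> (u + t *\<^sub>R w)) \<le> (u + t *\<^sub>R w) \<bullet> (M *v (u + t *\<^sub>R w))" by (rule ray)
      have e1: "(u + t *\<^sub>R w) \<bullet> (u + t *\<^sub>R w) = 1 + 2 * t * (u \<bullet> w) + t^2 * (w \<bullet> w)"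
        using uu by (simp add: inner_add inner_commute power2_eq_square algebra_simps)
      have e2: "(u + t *\<^sub>R w) \<bullet> (M *v (u + t *\<^sub>R w)) = m + 2 * t * (w \<bullet> (M *v u)) + t^2 * (w \<bullet> (M *v w))"
        using sym_inner[OF assms, of u w] by (simp add: m_def matrix_vector_right_distrib matrix_vector_mult_scaleR inner_add power2_eq_square algebra_simps)
      have "m * (1 + 2 * t * (u \<bullet> w) + t^2 * (w \<bullet> w)) \<le> m + 2 * t * (w \<bullet> (M *v u)) + t^2 * (w \<bullet> (M *v w))"
        using r unfolding e1 e2 .
      moreover have "(2 * (w \<bullet> (M *v u) - m * (u \<bullet> w))) * t + (w \<bullet> (M *v w) - m * (w \<bullet> w)) * t^2
         = (m + 2 * t * (w \<bullet> (M *v u)) + t^2 * (w \<bullet> (M *v w))) - m * (1 + 2 * t * (u \<bullet> w) + t^2 * (w \<bullet> w))"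
        by (simp add: algebra_simps)
      ultimately show ?thesis by linarith
    qed
    then have "2 * (w \<bullet> (M *v u) - m * (u \<bullet> w)) = 0" by (rule quad_zero)
    then show ?thesis by (simp add: inner_diff_right inner_commute)
  qed
  then have "M *v u - m *\<^sub>R u = 0" by (metis inner_eq_zero_iff)
  then have "M *v u = m *\<^sub>R u" by simp
  then show ?thesis using that nu ray m_def by auto
qed

lemma eig_finite:
  fixes M :: "real^'d^'d"
  assumes "transpose M = M"
  shows "finite {l. \<exists>v. v \<noteq> 0 \<and> M *v v = l *\<^sub>R v}" (is "finite ?S")
proof -
  define f where "f l = (SOME v. v \<noteq> 0 \<and> M *v v = l *\<^sub>R v)" for l
  have f: "f l \<noteq> 0 \<and> M *v f l = l *\<^sub>R f l" if lS: "l \<in> ?S" for l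
  proof -
    obtain v where "v \<noteq> 0 \<and> M *v v = l *\<^sub>R v" using lS by blast
    then show ?thesis unfolding f_def by (rule someI)
  qed
  have orth: "f l \<bullet> f l' = 0" if "l \<in> ?S" "l' \<in> ?S" "l \<noteq> l'" for l l'
  proof -
    have "l * (f l' \<bullet> f l) = f l' \<bullet> (M *v f l)" using f[OF that(1)] by simp
    also have "\<dots> = f l \<bullet> (M *v f l')" by (rule sym_inner[OF assms])
    also have "\<dots> = l' * (f l \<bullet> f l')" using f[OF that(2)] by simp
    finally show ?thesis using that(3) by (simp add: inner_commute)
  qed
  have inj: "inj_on f ?S"
  proof (rule inj_onI)
    fix l l' assume *: "l \<in> ?S" "l' \<in> ?S" "f l = f l'"
    show "l = l'"
    proof (rule ccontr)
      assume "l \<noteq> l'"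
      then have "f l \<bullet> f l' = 0" using orth * by blast
      then show False using * f[OF *(1)] by simp
    qed
  qed
  have po: "pairwise orthogonal (f ` ?S)"
    unfolding pairwise_def orthogonal_def
  proof (intro ballI impI)
    fix x y assume "x \<in> f ` ?S" "y \<in> f ` ?S" "x \<noteq> y"
    then obtain l l' where "l \<in> ?S" "l' \<in> ?S" "x = f l" "y = f l'" "l \<noteq> l'" by blast
    then show "x \<bullet> y = 0" using orth by blast
  qed
  have z: "0 \<notin> f ` ?S" using f by fastforce
  have "independent (f ` ?S)" by (rule pairwise_orthogonal_independent[OF po z])
  then have "finite (f ` ?S)" by (rule independent_imp_finite)
  then show ?thesis using inj by (rule finite_imageD)
qed

lemma lambda_min_sym:
  fixes M :: "real^'d^'d"
  assumes "transpose M = M"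
  shows "\<And>v. lambda_min M * (v \<bullet> v) \<le> v \<bullet> (M *v v)"
    and "(\<And>v. c * (v \<bullet> v) \<le> v \<bullet> (M *v v)) \<Longrightarrow> c \<le> lambda_min M"
proof -
  obtain u where u: "norm u = 1" "M *v u = (u \<bullet> (M *v u)) *\<^sub>R u"
    "\<And>v. (u \<bullet> (M *v u)) * (v \<bullet> v) \<le> v \<bullet> (M *v v)"
    using rayleigh_min[OF assms] by blast
  let ?S = "{l. \<exists>v. v \<noteq> 0 \<and> M *v v = l *\<^sub>R v}"
  let ?m = "u \<bullet> (M *v u)"
  have fin: "finite ?S" by (rule eig_finite[OF assms])
  have mS: "?m \<in> ?S" using u by (auto intro!: exI[of _ u])
  have lower: "c \<le> l" if lS: "l \<in> ?S" and cl: "\<And>v. c * (v \<bullet> v) \<le> v \<bullet> (M *v v)" for l c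
  proof -
    obtain v where v: "v \<noteq> 0" "M *v v = l *\<^sub>R v" using lS by blast
    have "c * (v \<bullet> v) \<le> l * (v \<bullet> v)" using cl[of v] v by simp
    moreover have "v \<bullet> v > 0" using v by simp
    ultimately show ?thesis by simp
  qed
  have eq: "lambda_min M = ?m"
    unfolding lambda_min_def
  proof (rule Min_eqI[OF fin _ mS])
    fix y assume "y \<in> ?S"
    then show "?m \<le> y" by (rule lower) (rule u(3))
  qed
  show "\<And>v. lambda_min M * (v \<bullet> v) \<le> v \<bullet> (M *v v)" using eq u(3) by simp
  show "(\<And>v. c * (v \<bullet> v) \<le> v \<bullet> (M *v v)) \<Longrightarrow> c \<le> lambda_min M"
    using eq lower[OF mS] by simp
qed



lemma outer_quad: "v \<bullet> (outer x *v v) = (v \<bullet> x)^2"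
proof -
  have "v \<bullet> (outer x *v v) = (\<Sum>a\<in>UNIV. \<Sum>b\<in>UNIV. (v$a * x$a) * (x$b * v$b))"
    by (simp add: outer_def matrix_vector_mult_def inner_vec_def sum_distrib_left algebra_simps)
  also have "\<dots> = (\<Sum>a\<in>UNIV. v$a * x$a) * (\<Sum>b\<in>UNIV. x$b * v$b)"
    by (simp add: sum_product)
  also have "\<dots> = (v \<bullet> x)^2"
    by (simp add: inner_vec_def power2_eq_square mult.commute)
  finally show ?thesis .
qed

lemma outer_transpose: "transpose (outer x) = outer x"
  by (simp add: outer_def transpose_def vec_eq_iff mult.commute)

lemma bl_quad: "bounded_linear (\<lambda>N::real^'d^'d. v \<bullet> (N *v v))"
proof -
  have "linear (\<lambda>N::real^'d^'d. v \<bullet> (N *v v))"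
    by (rule linearI) (simp_all add: matrix_vector_mult_add_rdistrib inner_add_right
        matrix_vector_mult_def inner_vec_def vec_eq_iff sum_distrib_left algebra_simps sum.distrib)
  then show ?thesis by (simp add: linear_conv_bounded_linear)
qed

lemma bl_transpose: "bounded_linear (transpose :: real^'d^'d \<Rightarrow> real^'d^'d)"
proof -
  have "linear (transpose :: real^'d^'d \<Rightarrow> real^'d^'d)"
    by (rule linearI) (simp_all add: transpose_def vec_eq_iff)
  then show ?thesis by (simp add: linear_conv_bounded_linear)
qed

lemma cond_sym:
  "transpose (cond_expect_on N B (\<lambda>\<omega>. outer (g \<omega>))) = cond_expect_on N B (\<lambda>\<omega>. outer (g \<omega>))"
proof -
  have "transpose (\<integral>\<omega>. indicator B \<omega> *\<^sub>R outer (g \<omega>) \<partial>N)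
        = (\<integral>\<omega>. transpose (indicator B \<omega> *\<^sub>R outer (g \<omega>)) \<partial>N)"
    by (rule integral_bounded_linear'[OF bl_transpose bl_transpose, symmetric]) simp
  also have "\<dots> = (\<integral>\<omega>. indicator B \<omega> *\<^sub>R outer (g \<omega>) \<partial>N)"
    by (simp add: transpose_scalar outer_transpose)
  finally show ?thesis unfolding cond_expect_on_def by (simp add: transpose_scalar)
qed

lemma cond_quad:
  assumes "integrable N (\<lambda>\<omega>. indicator B \<omega> *\<^sub>R outer (g \<omega>))"
  shows "v \<bullet> (cond_expect_on N B (\<lambda>\<omega>. outer (g \<omega>)) *v v)
    = (1 / measure N B) * (\<integral>\<omega>. indicator B \<omega> * (v \<bullet> g \<omega>)^2 \<partial>N)"
proof -
  have "v \<bullet> ((\<integral>\<omega>. indicator B \<omega> *\<^sub>R outer (g \<omega>) \<partial>N) *v v)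
      = (\<integral>\<omega>. v \<bullet> ((indicator B \<omega> *\<^sub>R outer (g \<omega>)) *v v) \<partial>N)"
    by (rule integral_bounded_linear[OF bl_quad assms, symmetric])
  also have "\<dots> = (\<integral>\<omega>. indicator B \<omega> * (v \<bullet> g \<omega>)^2 \<partial>N)"
    by (simp add: scaleR_matrix_vector_assoc[symmetric] outer_quad)
  finally show ?thesis
    unfolding cond_expect_on_def by (simp add: scaleR_matrix_vector_assoc[symmetric])
qed

lemma cond_quad_nonneg:
  "0 \<le> v \<bullet> (cond_expect_on N B (\<lambda>\<omega>. outer (g \<omega>)) *v v)"
proof (cases "integrable N (\<lambda>\<omega>. indicator B \<omega> *\<^sub>R outer (g \<omega>))")
  case True
  show ?thesis unfolding cond_quad[OF True]
    by (intro mult_nonneg_nonneg integral_nonneg) auto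
next
  case False
  then show ?thesis unfolding cond_expect_on_def
    by (simp add: not_integrable_integral_eq)
qed

lemma lambda_min_zero: "lambda_min (0::real^'d^'d) = 0"
proof -
  have s: "transpose (0::real^'d^'d) = 0" by (simp add: transpose_def vec_eq_iff)
  have a: "0 \<le> lambda_min (0::real^'d^'d)"
    by (rule lambda_min_sym(2)[OF s]) simp
  have v: "(1::real^'d) \<noteq> 0" by simp
  have "lambda_min (0::real^'d^'d) * ((1::real^'d) \<bullet> 1) \<le> (1::real^'d) \<bullet> ((0::real^'d^'d) *v 1)"
    using lambda_min_sym(1)[OF s] by blast
  moreover have "(1::real^'d) \<bullet> 1 > 0" using v by simp
  ultimately have "lambda_min (0::real^'d^'d) \<le> 0"
    by (simp add: mult_le_0_iff)
  then show ?thesis using a by simp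
qed



lemma halfspace_borel: "{e::real^'d. bh \<le> b \<bullet> e} \<in> sets borel"
  by (simp add: closed_halfspace_ge borel_closed inner_commute)

lemma key_single:
  fixes Di :: "(real^'d) measure"
  assumes prob: "prob_space Di" and sets: "sets Di = sets borel"
    and int: "integrable Di (\<lambda>e. outer (m + e))"
    and div: "diverse r l0 Di" and nm: "norm m \<le> 1" and bh: "bh \<le> r * norm b"
  shows "(\<integral>\<^sup>+y. ennreal (l0 * (v \<bullet> v) * indicator {e. bh \<le> b \<bullet> e} y) \<partial>Di)
       \<le> (\<integral>\<^sup>+y. ennreal (indicator {e. bh \<le> b \<bullet> e} y * (v \<bullet> (m + y))^2) \<partial>Di)"
proof -
  interpret prob_space Di by (rule prob)
  define E where "E = {e::real^'d. bh \<le> b \<bullet> e}"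
  define c where "c = l0 * (v \<bullet> v)"
  have sp: "space Di = UNIV" using sets_eq_imp_space_eq[OF sets] by simp
  have Es: "E \<in> sets Di" unfolding E_def sets by (rule halfspace_borel)
  have intE: "integrable Di (\<lambda>e. indicator E e *\<^sub>R outer (m + e))"
    by (rule integrable_mult_indicator[OF Es int])
  define I where "I = (\<integral>y. indicator E y * (v \<bullet> (m + y))^2 \<partial>Di)"
  have intq: "integrable Di (\<lambda>y. indicator E y * (v \<bullet> (m + y))^2)"
    using integrable_bounded_linear[OF bl_quad intE, of v]
    by (simp add: scaleR_matrix_vector_assoc[symmetric] outer_quad)
  have rhs: "(\<integral>\<^sup>+y. ennreal (indicator E y * (v \<bullet> (m + y))^2) \<partial>Di) = ennreal I"
    unfolding I_def by (rule nn_integral_eq_integral[OF intq]) auto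
  have lhs: "(\<integral>\<^sup>+y. ennreal (c * indicator E y) \<partial>Di) \<le> ennreal (c * measure Di E)"
  proof (cases "c \<ge> 0")
    case True
    have "(\<integral>\<^sup>+y. ennreal (c * indicator E y) \<partial>Di) = (\<integral>\<^sup>+y. ennreal c * indicator E y \<partial>Di)"
      by (intro nn_integral_cong) (auto simp: indicator_def)
    also have "\<dots> = ennreal c * emeasure Di E" by (rule nn_integral_cmult_indicator[OF Es])
    also have "\<dots> = ennreal (c * measure Di E)"
      using True by (simp add: emeasure_eq_measure ennreal_mult)
    finally show ?thesis by simp
  next
    case False
    then have "(\<integral>\<^sup>+y. ennreal (c * indicator E y) \<partial>Di) = 0"
      by (intro nn_integral_zero' AE_I2) (auto simp: indicator_def ennreal_neg)
    then show ?thesis by simp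
  qed
  have main: "c * measure Di E \<le> I"
  proof (cases "measure Di E = 0")
    case True
    then show ?thesis unfolding I_def by (simp add: integral_nonneg)
  next
    case False
    then have pos: "measure Di E > 0" using measure_nonneg[of Di E] by linarith
    have Eeq: "{e \<in> space Di. bh \<le> b \<bullet> e} = E" unfolding E_def sp by simp
    have "l0 \<le> lambda_min (cond_expect_on Di {e \<in> space Di. bh \<le> b \<bullet> e} (\<lambda>e. outer (m + e)))"
      using div nm bh unfolding diverse_def by blast
    then have "l0 \<le> lambda_min (cond_expect_on Di E (\<lambda>e. outer (m + e)))"
      unfolding Eeq .
    moreover have "lambda_min (cond_expect_on Di E (\<lambda>e. outer (m + e))) * (v \<bullet> v)
        \<le> v \<bullet> (cond_expect_on Di E (\<lambda>e. outer (m + e)) *v v)"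
      by (rule lambda_min_sym(1)[OF cond_sym])
    ultimately have "c \<le> v \<bullet> (cond_expect_on Di E (\<lambda>e. outer (m + e)) *v v)"
      unfolding c_def by (meson inner_ge_zero mult_right_mono order_trans)
    also have "\<dots> = I / measure Di E" unfolding cond_quad[OF intE] I_def by simp
    finally show ?thesis using pos by (simp add: field_simps)
  qed
  show ?thesis
    unfolding E_def[symmetric] c_def[symmetric] rhs
    using lhs main by (meson order_trans ennreal_leI)
qed



lemma outer_borel: "outer \<in> borel_measurable (borel :: (real^'d) measure)"
  by (rule borel_measurable_continuous_onI) (unfold outer_def, intro continuous_intros)

lemma comp_meas:
  assumes sets: "\<And>j. j < k \<Longrightarrow> sets (D j) = sets (borel :: (real^'d) measure)"
  shows "(\<lambda>\<omega>. \<omega> j) \<in> borel_measurable (Pi\<^sub>M {..<k} D :: (nat \<Rightarrow> real^'d) measure)"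
proof (cases "j < k")
  case True
  have "(\<lambda>\<omega>. \<omega> j) \<in> measurable (Pi\<^sub>M {..<k} D) (D j)"
    using True by (intro measurable_component_singleton) simp
  then show ?thesis using sets[OF True] by (simp cong: measurable_cong_sets)
next
  case False
  have "(\<lambda>\<omega>. undefined) \<in> borel_measurable (Pi\<^sub>M {..<k} D :: (nat \<Rightarrow> real^'d) measure)" by simp
  then show ?thesis
    by (rule measurable_cong[THEN iffD1, rotated]) (use False in \<open>auto simp: space_PiM PiE_def extensional_def\<close>)
qed

lemma A_meas:
  assumes sets: "\<And>j. j < k \<Longrightarrow> sets (D j) = sets (borel :: (real^'d) measure)"
  shows "{\<omega> \<in> space (Pi\<^sub>M {..<k} D).
                 greedy_picks k \<beta> (\<lambda>j. \<mu> j + \<omega> j) i \<and> r_good r k \<beta> \<mu> (\<lambda>j. \<mu> j + \<omega> j) i}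
         \<in> sets (Pi\<^sub>M {..<k} D)"
proof -
  note cm[measurable] = comp_meas[OF sets]
  have f: "(\<lambda>\<omega>. \<beta> \<bullet> (\<mu> j + \<omega> j)) \<in> borel_measurable (Pi\<^sub>M {..<k} D)" for j
    by measurable
  have p1: "Measurable.pred (Pi\<^sub>M {..<k} D) (\<lambda>\<omega>. \<beta> \<bullet> (\<mu> j + \<omega> j) \<le> \<beta> \<bullet> (\<mu> i + \<omega> i))" for j
    unfolding pred_def by (rule borel_measurable_le[OF f f])
  have p2: "Measurable.pred (Pi\<^sub>M {..<k} D) (\<lambda>\<omega>. \<beta> \<bullet> (\<mu> j + \<omega> j) \<le> \<beta> \<bullet> \<mu> i + r * norm \<beta>)" for j
    using f[of j] by measurable
  have "Measurable.pred (Pi\<^sub>M {..<k} D) (\<lambda>\<omega>. greedy_picks k \<beta> (\<lambda>j. \<mu> j + \<omega> j) i \<and> r_good r k \<beta> \<mu> (\<lambda>j. \<mu> j + \<omega> j) i)"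
    unfolding greedy_picks_def r_good_def
    by (intro pred_intros_logic pred_intros_countable allI p1 p2 measurable_const) simp_all
  then show ?thesis by (simp add: pred_def)
qed



lemma fubini_part:
  fixes k :: nat and i :: nat and r l0 :: real
    and \<beta> :: "real^'d" and \<mu> :: "nat \<Rightarrow> real^'d"
    and D :: "nat \<Rightarrow> (real^'d) measure" and v :: "real^'d"
  assumes i: "i < k"
    and mu_bd: "\<And>j. j < k \<Longrightarrow> norm (\<mu> j) \<le> 1"
    and D_prob: "\<And>j. j < k \<Longrightarrow> prob_space (D j)"
    and D_sets: "\<And>j. j < k \<Longrightarrow> sets (D j) = sets borel"
    and D_div: "\<And>j. j < k \<Longrightarrow> diverse r l0 (D j)"
    and int_i: "integrable (D i) (\<lambda>e. outer (\<mu> i + e))"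
    and P_def: "P = Pi\<^sub>M {..<k} D"
    and A_def: "A = {\<omega> \<in> space P.
                 greedy_picks k \<beta> (\<lambda>j. \<mu> j + \<omega> j) i \<and> r_good r k \<beta> \<mu> (\<lambda>j. \<mu> j + \<omega> j) i}"
  shows "(\<integral>\<^sup>+\<omega>. ennreal (l0 * (v \<bullet> v) * indicator A \<omega>) \<partial>P)
       \<le> (\<integral>\<^sup>+\<omega>. ennreal (indicator A \<omega> * (v \<bullet> (\<mu> i + \<omega> i))^2) \<partial>P)"
proof -
  define D' where "D' j = D (if j < k then j else i)" for j
  have pr': "prob_space (D' j)" for j unfolding D'_def using D_prob i by auto
  have sets': "sets (D' j) = sets borel" for j unfolding D'_def using D_sets i by auto
  have sp': "space (D' j) = UNIV" for j using sets_eq_imp_space_eq[OF sets'[of j]] by simp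
  interpret PS: product_sigma_finite D'
    unfolding product_sigma_finite_def using prob_space_imp_sigma_finite[OF pr'] by blast
  have PD: "P = Pi\<^sub>M {..<k} D'" unfolding P_def D'_def by (rule PiM_cong) auto
  have Di: "D' i = D i" using i by (simp add: D'_def)
  define I where "I = {..<k} - {i}"
  have ins: "insert i I = {..<k}" using i by (auto simp: I_def)
  have fin: "finite I" and notin: "i \<notin> I" by (auto simp: I_def)
  have Ameas[measurable]: "A \<in> sets P" unfolding A_def P_def by (rule A_meas[OF D_sets])
  have ci[measurable]: "(\<lambda>\<omega>. \<omega> i) \<in> borel_measurable P" unfolding P_def by (rule comp_meas[OF D_sets])
  define c where "c = l0 * (v \<bullet> v)"
  define F1 where "F1 \<omega> = ennreal (indicator A \<omega> * (v \<bullet> (\<mu> i + \<omega> i))^2)" for \<omega>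
  define F2 where "F2 \<omega> = ennreal (c * indicator A \<omega>)" for \<omega>
  have mF1: "F1 \<in> borel_measurable (Pi\<^sub>M (insert i I) D')"
    unfolding ins PD[symmetric] F1_def by measurable
  have mF2: "F2 \<in> borel_measurable (Pi\<^sub>M (insert i I) D')"
    unfolding ins PD[symmetric] F2_def by measurable
  have e1: "integral\<^sup>N P F1 = (\<integral>\<^sup>+ x. (\<integral>\<^sup>+ y. F1 (x(i := y)) \<partial>(D' i)) \<partial>(Pi\<^sub>M I D'))"
    using PS.product_nn_integral_insert[OF fin notin mF1] unfolding ins PD .
  have e2: "integral\<^sup>N P F2 = (\<integral>\<^sup>+ x. (\<integral>\<^sup>+ y. F2 (x(i := y)) \<partial>(D' i)) \<partial>(Pi\<^sub>M I D'))"
    using PS.product_nn_integral_insert[OF fin notin mF2] unfolding ins PD .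
  have pw: "(\<integral>\<^sup>+ y. F2 (x(i := y)) \<partial>(D' i)) \<le> (\<integral>\<^sup>+ y. F1 (x(i := y)) \<partial>(D' i))"
    if x: "x \<in> space (Pi\<^sub>M I D')" for x
  proof -
    have xs: "x(i := y) \<in> space P" for y
      using x unfolding PD space_PiM ins[symmetric] by (auto simp: PiE_def extensional_def sp')
    define G where "G = (\<forall>j<k. j \<noteq> i \<longrightarrow> \<beta> \<bullet> (\<mu> j + x j) \<le> \<beta> \<bullet> \<mu> i + r * norm \<beta>)"
    define T where "T = (\<lambda>j. \<beta> \<bullet> (\<mu> j + x j) - \<beta> \<bullet> \<mu> i) ` I"
    define b where "b = (if I = {} then 0 else \<beta>)"
    define bh where "bh = (if I = {} then 0 else Max T)"
    have finT: "finite T" unfolding T_def using fin by simp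
    have memA: "x(i := y) \<in> A \<longleftrightarrow> G \<and> bh \<le> b \<bullet> y" for y
    proof -
      have g: "greedy_picks k \<beta> (\<lambda>j. \<mu> j + (x(i := y)) j) i \<longleftrightarrow> (\<forall>j\<in>I. \<beta> \<bullet> (\<mu> j + x j) - \<beta> \<bullet> \<mu> i \<le> \<beta> \<bullet> y)"
      proof
        assume L: "greedy_picks k \<beta> (\<lambda>j. \<mu> j + (x(i := y)) j) i"
        show "\<forall>j\<in>I. \<beta> \<bullet> (\<mu> j + x j) - \<beta> \<bullet> \<mu> i \<le> \<beta> \<bullet> y"
        proof
          fix j assume "j \<in> I"
          then have j: "j < k" "j \<noteq> i" by (auto simp: I_def)
          then have "\<beta> \<bullet> (\<mu> j + x j) \<le> \<beta> \<bullet> (\<mu> i + y)" using L unfolding greedy_picks_def by auto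
          then show "\<beta> \<bullet> (\<mu> j + x j) - \<beta> \<bullet> \<mu> i \<le> \<beta> \<bullet> y" by (simp add: inner_add_right)
        qed
      next
        assume R: "\<forall>j\<in>I. \<beta> \<bullet> (\<mu> j + x j) - \<beta> \<bullet> \<mu> i \<le> \<beta> \<bullet> y"
        have "\<beta> \<bullet> (\<mu> j + (x(i := y)) j) \<le> \<beta> \<bullet> (\<mu> i + (x(i := y)) i)" if j: "j < k" for j
        proof (cases "j = i")
          case True then show ?thesis by simp
        next
          case False
          then have "j \<in> I" using j by (simp add: I_def)
          then have "\<beta> \<bullet> (\<mu> j + x j) - \<beta> \<bullet> \<mu> i \<le> \<beta> \<bullet> y" using R by blast
          then show ?thesis using False by (simp add: inner_add_right)
        qed
        then show "greedy_picks k \<beta> (\<lambda>j. \<mu> j + (x(i := y)) j) i"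
          unfolding greedy_picks_def using i by blast
      qed
      have rg: "r_good r k \<beta> \<mu> (\<lambda>j. \<mu> j + (x(i := y)) j) i \<longleftrightarrow> G"
        unfolding r_good_def G_def by auto
      have "(\<forall>j\<in>I. \<beta> \<bullet> (\<mu> j + x j) - \<beta> \<bullet> \<mu> i \<le> \<beta> \<bullet> y) \<longleftrightarrow> bh \<le> b \<bullet> y"
      proof (cases "I = {}")
        case True then show ?thesis by (simp add: b_def bh_def)
      next
        case False
        then have "T \<noteq> {}" unfolding T_def by simp
        then show ?thesis using False finT by (simp add: b_def bh_def Max_le_iff T_def)
      qed
      then show ?thesis unfolding A_def using xs g rg by auto
    qed
    show ?thesis
    proof (cases G)
      case False
      have "(\<integral>\<^sup>+ y. F2 (x(i := y)) \<partial>(D' i)) = 0"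
        unfolding F2_def using memA False by (simp add: indicator_def)
      then show ?thesis by simp
    next
      case True
      have bhr: "bh \<le> r * norm b"
      proof (cases "I = {}")
        case True then show ?thesis by (simp add: b_def bh_def)
      next
        case False
        then have "T \<noteq> {}" unfolding T_def by simp
        moreover have "\<forall>t\<in>T. t \<le> r * norm \<beta>" using \<open>G\<close> unfolding G_def T_def I_def by auto
        ultimately show ?thesis using False finT by (simp add: b_def bh_def Max_le_iff)
      qed
      have f2: "(\<integral>\<^sup>+ y. F2 (x(i := y)) \<partial>(D' i)) = (\<integral>\<^sup>+y. ennreal (l0 * (v \<bullet> v) * indicator {e. bh \<le> b \<bullet> e} y) \<partial>D i)"
        unfolding F2_def Di c_def using memA True by (intro nn_integral_cong) (simp add: indicator_def)
      have f1: "(\<integral>\<^sup>+ y. F1 (x(i := y)) \<partial>(D' i)) = (\<integral>\<^sup>+y. ennreal (indicator {e. bh \<le> b \<bullet> e} y * (v \<bullet> (\<mu> i + y))^2) \<partial>D i)"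
        unfolding F1_def Di using memA True by (intro nn_integral_cong) (simp add: indicator_def)
      show ?thesis unfolding f1 f2
        by (rule key_single[OF D_prob[OF i] D_sets[OF i] int_i D_div[OF i] mu_bd[OF i] bhr])
    qed
  qed
  have "integral\<^sup>N P F2 \<le> integral\<^sup>N P F1"
    unfolding e1 e2 by (intro nn_integral_mono pw)
  then show ?thesis unfolding F1_def F2_def c_def .
qed



theorem lemma2:
  fixes k :: nat and i :: nat and r l0 :: real
    and \<beta> :: "real^'d" and \<mu> :: "nat \<Rightarrow> real^'d"
    and D :: "nat \<Rightarrow> (real^'d) measure"
  assumes i: "i < k"
    and mu_bd: "\<And>j. j < k \<Longrightarrow> norm (\<mu> j) \<le> 1"
    and D_prob: "\<And>j. j < k \<Longrightarrow> prob_space (D j)"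
    and D_sets: "\<And>j. j < k \<Longrightarrow> sets (D j) = sets borel"
    and D_mean0: "\<And>j. j < k \<Longrightarrow> integrable (D j) (\<lambda>e. e) \<and> (\<integral>e. e \<partial>D j) = 0"
    and D_div: "\<And>j. j < k \<Longrightarrow> diverse r l0 (D j)"
    and pos: "measure (\<Pi>\<^sub>M j\<in>{..<k}. D j)
               {\<omega> \<in> space (\<Pi>\<^sub>M j\<in>{..<k}. D j).
                  greedy_picks k \<beta> (\<lambda>j. \<mu> j + \<omega> j) i \<and> r_good r k \<beta> \<mu> (\<lambda>j. \<mu> j + \<omega> j) i} > 0"
  shows "l0 \<le> lambda_min
           (cond_expect_on (\<Pi>\<^sub>M j\<in>{..<k}. D j)
              {\<omega> \<in> space (\<Pi>\<^sub>M j\<in>{..<k}. D j).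
                 greedy_picks k \<beta> (\<lambda>j. \<mu> j + \<omega> j) i \<and> r_good r k \<beta> \<mu> (\<lambda>j. \<mu> j + \<omega> j) i}
              (\<lambda>\<omega>. outer (\<mu> i + \<omega> i)))"
proof -
  define P where "P = (\<Pi>\<^sub>M j\<in>{..<k}. D j)"
  define A where "A = {\<omega> \<in> space P.
                 greedy_picks k \<beta> (\<lambda>j. \<mu> j + \<omega> j) i \<and> r_good r k \<beta> \<mu> (\<lambda>j. \<mu> j + \<omega> j) i}"
  have Ameas: "A \<in> sets P" unfolding A_def P_def by (rule A_meas[OF D_sets])
  have posA: "measure P A > 0" using pos unfolding P_def A_def .
  have sym: "transpose (cond_expect_on P A (\<lambda>\<omega>. outer (\<mu> i + \<omega> i))) = cond_expect_on P A (\<lambda>\<omega>. outer (\<mu> i + \<omega> i))"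
    by (rule cond_sym)
  have "l0 \<le> lambda_min (cond_expect_on P A (\<lambda>\<omega>. outer (\<mu> i + \<omega> i)))"
  proof (rule lambda_min_sym(2)[OF sym])
    fix v :: "real^'d"
    show "l0 * (v \<bullet> v) \<le> v \<bullet> (cond_expect_on P A (\<lambda>\<omega>. outer (\<mu> i + \<omega> i)) *v v)"
    proof (cases "l0 \<le> 0")
      case True
      have "l0 * (v \<bullet> v) \<le> 0" using True by (simp add: mult_nonpos_nonneg)
      also have "0 \<le> v \<bullet> (cond_expect_on P A (\<lambda>\<omega>. outer (\<mu> i + \<omega> i)) *v v)"
        by (rule cond_quad_nonneg)
      finally show ?thesis .
    next
      case False
      then have l0pos: "l0 > 0" by simp
      have int_i: "integrable (D i) (\<lambda>e. outer (\<mu> i + e))"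
      proof (rule ccontr)
        assume ni: "\<not> integrable (D i) (\<lambda>e. outer (\<mu> i + e))"
        let ?E = "{e \<in> space (D i). 0 \<le> (0::real^'d) \<bullet> e}"
        have "l0 \<le> lambda_min (cond_expect_on (D i) ?E (\<lambda>e. outer (\<mu> i + e)))"
          by (rule diverse_def[THEN iffD1, OF D_div[OF i], rule_format, of "\<mu> i" 0 0, OF mu_bd[OF i]]) simp
        also have "cond_expect_on (D i) ?E (\<lambda>e. outer (\<mu> i + e)) = 0"
        proof -
          have "integrable (D i) (\<lambda>e. indicator ?E e *\<^sub>R outer (\<mu> i + e)) \<longleftrightarrow> integrable (D i) (\<lambda>e. outer (\<mu> i + e))"
            by (rule Bochner_Integration.integrable_cong[OF refl]) (auto simp: indicator_def)
          then show ?thesis using ni unfolding cond_expect_on_def by (simp add: not_integrable_integral_eq)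
        qed
        finally have "l0 \<le> lambda_min (0::real^'d^'d)" .
        moreover have "lambda_min (0::real^'d^'d) = 0" by (rule lambda_min_zero)
        ultimately show False using l0pos by simp
      qed
      have distr: "distr P (D i) (\<lambda>\<omega>. \<omega> i) = D i"
        unfolding P_def by (rule distr_PiM_component) (use D_prob i in auto)
      have cmi: "(\<lambda>\<omega>. \<omega> i) \<in> measurable P (D i)"
        unfolding P_def by (rule measurable_component_singleton) (use i in simp)
      have ob0: "(\<lambda>e. outer (\<mu> i + e)) \<in> borel_measurable (borel :: (real^'d) measure)"
        by (rule borel_measurable_continuous_onI) (unfold outer_def, intro continuous_intros)
      have "measurable (D i) (borel :: (real^'d^'d) measure) = measurable borel borel"
        by (rule measurable_cong_sets[OF D_sets[OF i] refl])
      then have ob: "(\<lambda>e. outer (\<mu> i + e)) \<in> borel_measurable (D i)" using ob0 by simp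
      have intP: "integrable P (\<lambda>\<omega>. outer (\<mu> i + \<omega> i))"
        using integrable_distr_eq[OF cmi ob] int_i distr by simp
      have intPA: "integrable P (\<lambda>\<omega>. indicator A \<omega> *\<^sub>R outer (\<mu> i + \<omega> i))"
        by (rule integrable_mult_indicator[OF Ameas intP])
      define I where "I = (\<integral>\<omega>. indicator A \<omega> * (v \<bullet> (\<mu> i + \<omega> i))^2 \<partial>P)"
      have quad: "v \<bullet> (cond_expect_on P A (\<lambda>\<omega>. outer (\<mu> i + \<omega> i)) *v v) = (1 / measure P A) * I"
        unfolding I_def by (rule cond_quad[OF intPA])
      have intq: "integrable P (\<lambda>\<omega>. indicator A \<omega> * (v \<bullet> (\<mu> i + \<omega> i))^2)"
        using integrable_bounded_linear[OF bl_quad intPA, of v]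
        by (simp add: scaleR_matrix_vector_assoc[symmetric] outer_quad)
      define c where "c = l0 * (v \<bullet> v)"
      have c0: "c \<ge> 0" using l0pos by (simp add: c_def)
      have I0: "I \<ge> 0" unfolding I_def by (rule Bochner_Integration.integral_nonneg) auto
      have nnI: "(\<integral>\<^sup>+\<omega>. ennreal (indicator A \<omega> * (v \<bullet> (\<mu> i + \<omega> i))^2) \<partial>P) = ennreal I"
        unfolding I_def by (rule nn_integral_eq_integral[OF intq]) auto
      have nnc: "(\<integral>\<^sup>+\<omega>. ennreal (c * indicator A \<omega>) \<partial>P) = ennreal (c * measure P A)"
      proof -
        interpret prob_space P unfolding P_def by (rule prob_space_PiM) (use D_prob in auto)
        have "(\<integral>\<^sup>+\<omega>. ennreal (c * indicator A \<omega>) \<partial>P) = (\<integral>\<^sup>+\<omega>. ennreal c * indicator A \<omega> \<partial>P)"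
          by (intro nn_integral_cong) (auto simp: indicator_def)
        also have "\<dots> = ennreal c * emeasure P A" by (rule nn_integral_cmult_indicator[OF Ameas])
        also have "\<dots> = ennreal (c * measure P A)"
          using c0 by (simp add: emeasure_eq_measure ennreal_mult)
        finally show ?thesis .
      qed
      have "(\<integral>\<^sup>+\<omega>. ennreal (c * indicator A \<omega>) \<partial>P) \<le> (\<integral>\<^sup>+\<omega>. ennreal (indicator A \<omega> * (v \<bullet> (\<mu> i + \<omega> i))^2) \<partial>P)"
        unfolding c_def by (rule fubini_part[OF i mu_bd D_prob D_sets D_div int_i P_def A_def])
      then have "ennreal (c * measure P A) \<le> ennreal I" unfolding nnI nnc .
      then have "c * measure P A \<le> I" using I0 by (simp add: ennreal_le_iff)
      then have "c \<le> (1 / measure P A) * I" using posA by (simp add: field_simps)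
      then show ?thesis unfolding quad c_def .
    qed
  qed
  then show ?thesis unfolding P_def A_def .
qed


end
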